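(* Let $p>3$ be prime, $a,b\in\mathbb{Q}_p$, $ab\neq0$, $(a,b)\in\Delta=\Delta_1\cup\Delta_2\cup\Delta_3$. Then the equation $x^3+ax=b$ never has three roots (counted with multiplicity) with one in each of $\mathbb{Z}_p\setminus\mathbb{Z}_p^*$, $\mathbb{Z}_p^*$, $\mathbb{Q}_p\setminus\mathbb{Z}_p$. Moreover, if $(a,b)\in\Delta_2$, then for any two distinct sets $A,B\in\{\mathbb{Z}_p\setminus\mathbb{Z}_p^*,\ \mathbb{Z}_p^*,\ \mathbb{Q}_p\setminus\mathbb{Z}_p\}$ and $m,n>0$ with $m+n=3$, the equation is not solvable in $A^{[n]}\sqcup B^{[m]}$.
   Context: $\mathbb{Z}_p^*=\{x:|x|_p=1\}$. Nonzero $c\in\mathbb{Q}_p$ is written $c=c^*/|c|_p$, $c^*=c_0+c_1p+\cdots\in\mathbb{Z}_p^*$, $c_0\in\{1,\dots,p-1\}$. "$\sqrt[3]{b}$ exists" means $b_0^{(p-1)/\gcd(3,p-1)}\equiv1\pmod p$ and $3\mid\log_p|b|_p$. $D_0=-4a_0^3-27b_0^2$; $u_1=0,u_2=-a_0,u_3=b_0,u_{n+3}=b_0u_n-a_0u_{n+1}$. $\Delta_1=\{|a|_p^3<|b|_p^2,\ \sqrt[3]{b}\text{ exists}\}$, $\Delta_2=\{|a|_p^3=|b|_p^2,\ D_0u_{p-2}^2\not\equiv 9a_0^2\pmod p\}$, $\Delta_3=\{|a|_p^3>|b|_p^2\}$. "Solvable in $A^{[n]}\sqcup B^{[m]}$"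 means exactly $n$ of the roots in $\mathbb{Q}_p$ (with multiplicity) lie in $A$ and exactly $m$ lie in $B$. *)

theory Defs
  imports "HOL-Computational_Algebra.Computational_Algebra" "HOL-Number_Theory.Cong"
begin

text \<open>A pair (type 'a, nv) satisfies
  is_Qp p nv iff 'a with the absolute value nv is a complete non-archimedean valued field of
  characteristic 0 in which the rationals (with the p-adic absolute value) are dense; such a
  pair is unique up to isometric isomorphism and is Q_p with nv = |.|_p.\<close>

definition is_Qp :: "nat \<Rightarrow> ('a::field_char_0 \<Rightarrow> real) \<Rightarrow> bool" where
  "is_Qp p nv \<longleftrightarrow>
     (\<forall>x. 0 \<le> nv x) \<and> (\<forall>x. nv x = 0 \<longleftrightarrow> x = 0) \<and>
     (\<forall>x y. nv (x * y) = nv x * nv y) \<and>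
     (\<forall>x y. nv (x + y) \<le> max (nv x) (nv y)) \<and>
     (\<forall>n::int. n \<noteq> 0 \<longrightarrow> nv (of_int n) = 1 / real p ^ multiplicity (int p) n) \<and>
     (\<forall>X::nat \<Rightarrow> 'a. (\<forall>e>0. \<exists>N. \<forall>m\<ge>N. \<forall>n\<ge>N. nv (X m - X n) < e) \<longrightarrow>
          (\<exists>L. \<forall>e>0. \<exists>N. \<forall>n\<ge>N. nv (X n - L) < e)) \<and>
     (\<forall>x e. 0 < e \<longrightarrow> (\<exists>q::rat. nv (x - of_rat q) < e))"

definition padic_ord :: "nat \<Rightarrow> ('a::field_char_0 \<Rightarrow> real) \<Rightarrow> 'a \<Rightarrow> int" where
  "padic_ord p nv c = (THE k::int. nv c = real p powr (- real_of_int k))"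

definition unit_part :: "nat \<Rightarrow> ('a::field_char_0 \<Rightarrow> real) \<Rightarrow> 'a \<Rightarrow> 'a" where
  "unit_part p nv c = c * (of_nat p) powi (- padic_ord p nv c)"

text \<open>The first p-adic digit c_0 of c* = c_0 + c_1 p + ..., c_0 in {1,...,p-1}.\<close>
definition first_digit :: "nat \<Rightarrow> ('a::field_char_0 \<Rightarrow> real) \<Rightarrow> 'a \<Rightarrow> int" where
  "first_digit p nv c =
     (THE d::int. 1 \<le> d \<and> d \<le> int p - 1 \<and> nv (unit_part p nv c - of_int d) < 1)"

text \<open>The sequence u_n (u_1 = 0, u_2 = -a0, u_3 = b0, u_{n+3} = b0 u_n - a0 u_{n+1});
  the value at index 0 is set to 1, which is consistent with the recurrence at n = 0.\<close>
fun useq :: "int \<Rightarrow> int \<Rightarrow> nat \<Rightarrow> int" where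
  "useq a0 b0 0 = 1"
| "useq a0 b0 (Suc 0) = 0"
| "useq a0 b0 (Suc (Suc 0)) = - a0"
| "useq a0 b0 (Suc (Suc (Suc n))) = b0 * useq a0 b0 n - a0 * useq a0 b0 (Suc n)"

definition D0 :: "int \<Rightarrow> int \<Rightarrow> int" where
  "D0 a0 b0 = - 4 * a0 ^ 3 - 27 * b0 ^ 2"

definition cube_root_exists :: "nat \<Rightarrow> ('a::field_char_0 \<Rightarrow> real) \<Rightarrow> 'a \<Rightarrow> bool" where
  "cube_root_exists p nv b \<longleftrightarrow>
     [first_digit p nv b ^ ((p - 1) div gcd 3 (p - 1)) = 1] (mod int p) \<and>
     (\<exists>k::int. log (real p) (nv b) = real_of_int (3 * k))"

definition Delta1 :: "nat \<Rightarrow> ('a::field_char_0 \<Rightarrow> real) \<Rightarrow> 'a \<Rightarrow> 'a \<Rightarrow> bool" where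
  "Delta1 p nv a b \<longleftrightarrow> nv a ^ 3 < nv b ^ 2 \<and> cube_root_exists p nv b"

definition Delta2 :: "nat \<Rightarrow> ('a::field_char_0 \<Rightarrow> real) \<Rightarrow> 'a \<Rightarrow> 'a \<Rightarrow> bool" where
  "Delta2 p nv a b \<longleftrightarrow> nv a ^ 3 = nv b ^ 2 \<and>
     (let a0 = first_digit p nv a; b0 = first_digit p nv b in
      \<not> [D0 a0 b0 * useq a0 b0 (p - 2) ^ 2 = 9 * a0 ^ 2] (mod int p))"

definition Delta3 :: "nat \<Rightarrow> ('a::field_char_0 \<Rightarrow> real) \<Rightarrow> 'a \<Rightarrow> 'a \<Rightarrow> bool" where
  "Delta3 p nv a b \<longleftrightarrow> nv a ^ 3 > nv b ^ 2"

definition pZp :: "('a \<Rightarrow> real) \<Rightarrow> 'a set" where "pZp nv = {x. nv x < 1}"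
definition Zp_units :: "('a \<Rightarrow> real) \<Rightarrow> 'a set" where "Zp_units nv = {x. nv x = 1}"
definition non_Zp :: "('a \<Rightarrow> real) \<Rightarrow> 'a set" where "non_Zp nv = {x. 1 < nv x}"

definition nroots_in :: "'a::field poly \<Rightarrow> 'a set \<Rightarrow> nat" where
  "nroots_in f A = (\<Sum>r\<in>{r\<in>A. poly f r = 0}. order r f)"

definition solvable_in :: "'a::field poly \<Rightarrow> 'a set \<Rightarrow> nat \<Rightarrow> 'a set \<Rightarrow> nat \<Rightarrow> bool" where
  "solvable_in f A n B m \<longleftrightarrow> nroots_in f A = n \<and> nroots_in f B = m"

end

theory Submission
  imports Defs
begin

lemma nv_basic:
  fixes nv :: "'a::field_char_0 \<Rightarrow> real"
  assumes "is_Qp p nv"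
  shows "\<And>x. 0 \<le> nv x" "\<And>x. nv x = 0 \<longleftrightarrow> x = 0" "\<And>x y. nv (x*y) = nv x * nv y"
    "\<And>x y. nv (x+y) \<le> max (nv x) (nv y)"
  using assms unfolding is_Qp_def by auto

lemma nv_neg:
  fixes nv :: "'a::field_char_0 \<Rightarrow> real"
  assumes "is_Qp p nv"
  shows "nv (- x) = nv x"
proof -
  note B = nv_basic[OF assms]
  have "nv 1 = nv 1 * nv 1" using B(3)[of 1 1] by simp
  moreover have "nv 1 \<noteq> 0" using B(2)[of 1] by simp
  ultimately have n1: "nv 1 = 1" by (metis mult_cancel_left1)
  have "nv (-1) * nv (-1) = 1" using B(3)[of "-1" "-1"] n1 by simp
  hence m1: "nv (-1) = 1" using B(1)[of "-1"]
    by (metis abs_of_nonneg real_sqrt_abs2 real_sqrt_one power2_eq_square)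
  have "nv (-x) = nv (-1) * nv x" using B(3)[of "-1" x] by simp
  thus ?thesis using m1 by simp
qed

lemma nv_strict:
  fixes nv :: "'a::field_char_0 \<Rightarrow> real"
  assumes "is_Qp p nv" and "nv y < nv x"
  shows "nv (x + y) = nv x"
proof -
  note B = nv_basic[OF assms(1)]
  have 1: "nv (x+y) \<le> nv x" using B(4)[of x y] assms(2) by simp
  have "nv x \<le> max (nv (x+y)) (nv (-y))" using B(4)[of "x+y" "-y"] by simp
  hence "nv x \<le> max (nv (x+y)) (nv y)" using nv_neg[OF assms(1)] by simp
  thus ?thesis using 1 assms(2) by linarith
qed

lemma poly_f: "poly [:- b, a, 0, 1:] (r::'a::field) = r^3 + a*r - b"
  by (simp add: algebra_simps power3_eq_cube)

lemma root_of_nroots: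
  assumes "0 < nroots_in f A"
  shows "\<exists>r\<in>A. poly f r = 0"
proof (rule ccontr)
  assume "\<not> ?thesis"
  hence "{r\<in>A. poly f r = 0} = {}" by auto
  thus False using assms unfolding nroots_in_def by (metis sum.empty less_irrefl)
qed

lemma sum_roots:
  fixes r1 r2 r3 a b :: "'a::field"
  assumes "r1^3 + a*r1 - b = 0" "r2^3 + a*r2 - b = 0" "r3^3 + a*r3 - b = 0"
    "r1 \<noteq> r2" "r1 \<noteq> r3" "r2 \<noteq> r3"
  shows "r1 + r2 + r3 = 0"
proof -
  have "(r1 - r2) * (r1^2 + r1*r2 + r2^2 + a) = 0"
    using assms(1,2) by (simp add: algebra_simps power2_eq_square power3_eq_cube)
  hence e1: "r1^2 + r1*r2 + r2^2 + a = 0" using assms(4) by simp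
  have "(r1 - r3) * (r1^2 + r1*r3 + r3^2 + a) = 0"
    using assms(1,3) by (simp add: algebra_simps power2_eq_square power3_eq_cube)
  hence e2: "r1^2 + r1*r3 + r3^2 + a = 0" using assms(5) by simp
  have "(r2 - r3) * (r1 + r2 + r3) = (r1^2 + r1*r2 + r2^2 + a) - (r1^2 + r1*r3 + r3^2 + a)"
    by (simp add: algebra_simps power2_eq_square)
  hence "(r2 - r3) * (r1 + r2 + r3) = 0" using e1 e2 by simp
  thus ?thesis using assms(6) by simp
qed

lemma root_abs:
  fixes nv :: "'a::field_char_0 \<Rightarrow> real"
  assumes Q: "is_Qp p nv" and ab: "a * b \<noteq> 0" and eq: "nv a ^ 3 = nv b ^ 2"
    and r: "r^3 + a*r - b = 0"
  shows "nv r ^ 2 = nv a"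
proof -
  note B = nv_basic[OF Q]
  have bb: "b = r^3 + a*r" using r by (simp add: algebra_simps)
  have a0: "a \<noteq> 0" "b \<noteq> 0" using ab by auto
  have r0: "r \<noteq> 0" using bb a0 by auto
  have R: "nv r > 0" using B(1)[of r] B(2)[of r] r0 by linarith
  have A: "nv a > 0" using B(1)[of a] B(2)[of a] a0 by linarith
  have n3: "nv (r^3) = nv r ^ 3" using B(3) by (simp add: power3_eq_cube)
  have nar: "nv (a*r) = nv a * nv r" using B(3) by simp
  show ?thesis
  proof (rule ccontr)
    assume ne: "nv r ^ 2 \<noteq> nv a"
    show False
    proof (cases "nv r ^ 2 > nv a")
      case True
      have "nv a * nv r < nv r ^ 3" using True R
        by (simp add: power2_eq_square power3_eq_cube)
      hence "nv b = nv r ^ 3" using nv_strict[OF Q, of "a*r" "r^3"] bb n3 nar by simp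
      hence "nv b ^ 2 = (nv r ^ 2) ^ 3" by (simp add: power_mult[symmetric])
      moreover have "(nv r ^ 2) ^ 3 > nv a ^ 3"
        using True A by (intro power_strict_mono) auto
      ultimately show False using eq by simp
    next
      case False
      hence lt: "nv r ^ 2 < nv a" using ne by simp
      have "nv r ^ 3 < nv a * nv r" using lt R
        by (simp add: power2_eq_square power3_eq_cube)
      hence "nv b = nv a * nv r" using nv_strict[OF Q, of "r^3" "a*r"] bb n3 nar
        by (simp add: add.commute)
      hence "nv b ^ 2 = nv a ^ 2 * nv r ^ 2" by (simp add: power_mult_distrib)
      also have "\<dots> < nv a ^ 2 * nv a" using lt A by simp
      finally show False using eq by (simp add: power2_eq_square power3_eq_cube)
    qed
  qed
qed

theorem mainTheorem3:
  fixes p :: nat and nv :: "'a::field_char_0 \<Rightarrow> real" and a b :: 'a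
  assumes "prime p" and "p > 3" and "is_Qp p nv"
    and "a * b \<noteq> 0"
    and "Delta1 p nv a b \<or> Delta2 p nv a b \<or> Delta3 p nv a b"
  shows "\<not> (nroots_in [:- b, a, 0, 1:] (pZp nv) = 1 \<and> nroots_in [:- b, a, 0, 1:] (Zp_units nv) = 1
             \<and> nroots_in [:- b, a, 0, 1:] (non_Zp nv) = 1)
      \<and> (Delta2 p nv a b \<longrightarrow>
           (\<forall>A B m n. A \<in> {pZp nv, Zp_units nv, non_Zp nv} \<longrightarrow>
              B \<in> {pZp nv, Zp_units nv, non_Zp nv} \<longrightarrow> A \<noteq> B \<longrightarrow>
              0 < m \<longrightarrow> 0 < n \<longrightarrow> m + n = 3 \<longrightarrow> \<not> solvable_in [:- b, a, 0, 1:] A n B m))"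
proof (intro conjI impI allI notI)
  note Q = assms(3)
  note B = nv_basic[OF Q]
  assume H: "nroots_in [:- b, a, 0, 1:] (pZp nv) = 1 \<and> nroots_in [:- b, a, 0, 1:] (Zp_units nv) = 1
             \<and> nroots_in [:- b, a, 0, 1:] (non_Zp nv) = 1"
  obtain r1 where r1: "r1 \<in> pZp nv" "poly [:- b, a, 0, 1:] r1 = 0"
    using root_of_nroots[of "[:- b, a, 0, 1:]" "pZp nv"] H by auto
  obtain r2 where r2: "r2 \<in> Zp_units nv" "poly [:- b, a, 0, 1:] r2 = 0"
    using root_of_nroots[of "[:- b, a, 0, 1:]" "Zp_units nv"] H by auto
  obtain r3 where r3: "r3 \<in> non_Zp nv" "poly [:- b, a, 0, 1:] r3 = 0"
    using root_of_nroots[of "[:- b, a, 0, 1:]" "non_Zp nv"] H by auto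
  have d: "r1 \<noteq> r2" "r1 \<noteq> r3" "r2 \<noteq> r3" using r1 r2 r3
    by (auto simp: pZp_def Zp_units_def non_Zp_def)
  have "r1 + r2 + r3 = 0" using r1 r2 r3 unfolding poly_f by (intro sum_roots[OF _ _ _ d])
  hence "r3 = - (r1 + r2)" by (metis add.commute add_eq_0_iff)
  hence "nv r3 = nv (r1 + r2)" using nv_neg[OF Q, of "r1 + r2"] by simp
  also have "\<dots> \<le> max (nv r1) (nv r2)" by (rule B(4))
  finally show False using r1 r2 r3 by (auto simp: pZp_def Zp_units_def non_Zp_def)
next
  fix A Bs m n
  note Q = assms(3)
  assume D2: "Delta2 p nv a b"
    and A: "A \<in> {pZp nv, Zp_units nv, non_Zp nv}" and Bs: "Bs \<in> {pZp nv, Zp_units nv, non_Zp nv}"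
    and AB: "A \<noteq> Bs" and m: "0 < m" and n: "0 < n" and mn: "m + n = 3"
    and S: "solvable_in [:- b, a, 0, 1:] A n Bs m"
  have eq: "nv a ^ 3 = nv b ^ 2" using D2 unfolding Delta2_def by simp
  obtain r where r: "r \<in> A" "poly [:- b, a, 0, 1:] r = 0"
    using root_of_nroots[of "[:- b, a, 0, 1:]" A] S n unfolding solvable_in_def by auto
  obtain s where s: "s \<in> Bs" "poly [:- b, a, 0, 1:] s = 0"
    using root_of_nroots[of "[:- b, a, 0, 1:]" Bs] S m unfolding solvable_in_def by auto
  have "nv r ^ 2 = nv a" using r(2) unfolding poly_f by (rule root_abs[OF Q assms(4) eq])
  moreover have "nv s ^ 2 = nv a" using s(2) unfolding poly_f by (rule root_abs[OF Q assms(4) eq])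
  ultimately have "nv r ^ 2 = nv s ^ 2" by simp
  hence rs: "nv r = nv s" using nv_basic(1)[OF Q, of r] nv_basic(1)[OF Q, of s]
    by (simp add: power2_eq_iff_nonneg)
  show False using A Bs AB r(1) s(1) rs
    by (auto simp: pZp_def Zp_units_def non_Zp_def)
qed

end
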